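(* Let $T$ be a complete theory in a language $\mathcal{L}$ with monster model $\mathbb{M}$, and let $\varphi(x;y_1,\ldots,y_r)\in\mathcal{L}$ be an NIP formula. Then there exist $d'=d'(\varphi)\in\mathbb{N}$ and a finite set of $\mathcal{L}$-formulas $\Delta$ such that: for every $k\in\mathbb{N}$, every $b\in\mathbb{M}^x$ and every $\Delta$-indiscernible $k$-dimensional array $(a_{\bar i}:\bar i\in I_1\times\cdots\times I_k)$ with each $I_s$ a finite linear order, there exist $\bar j_1,\ldots,\bar j_{d'}\in I_1\times\cdots\times I_k$ such that for all $\bar i^\alpha_1,\ldots,\bar i^\alpha_r\in I_1\times\cdots\times I_k$ ($\alpha\in\{0,1\}$): if for every $1\le s\le k$, $$\operatorname{qftp}_<(i^0_{1,s},\ldots,i^0_{r,s}/j_{1,s},\ldots,j_{d',s})=\operatorname{qftp}_<(i^1_{1,s},\ldots,i^1_{r,s}/j_{1,s},\ldots,j_{d',s}),$$ then $\models\varphi(b;a_{\bar i^0_1},\ldots,a_{\bar i^0_r})\leftrightarrow\varphi(b;a_{\bar i^1_1},\ldots,a_{\bar i^1_r})$.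
   Context: A formula is NIP if every formula obtained from it by partitioning its variables into two groups is NIP. Tuples $\bar i=(i_1,\ldots,i_k)$ have coordinates written $i_s$ (so $\bar i^\alpha_t=(i^\alpha_{t,1},\ldots,i^\alpha_{t,k})$ and $\bar j_t=(j_{t,1},\ldots,j_{t,k})$); $\operatorname{qftp}_<$ is the quantifier-free type in the language of the order. An array $(a_{\bar i}:\bar i\in I_1\times\cdots\times I_k)$ is $\Delta$-indiscernible if for every $\psi(x_1,\ldots,x_m)\in\Delta$ and all $\bar i^\alpha_1,\ldots,\bar i^\alpha_m$, $\alpha\in\{0,1\}$, such that for each coordinate $s$ the tuples $(i^0_{1,s},\ldots,i^0_{m,s})$ and $(i^1_{1,s},\ldots,i^1_{m,s})$ have the same quantifier-free order type, we have $\models\psi(a_{\bar i^0_1},\ldots,a_{\bar i^0_m})\leftrightarrow\psi(a_{\bar i^1_1},\ldots,a_{\bar i^1_m})$. *)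

theory Defs
  imports Main
begin

text \<open>A language L is given by a type 'f of function symbols and a type 'p of
relation symbols (each symbol may be used with any arity). Variables are natural numbers.\<close>

datatype 'f trm = Var nat | Fun 'f "'f trm list"

datatype ('f, 'p) fm =
    FF
  | Atom 'p "'f trm list"
  | Eq "'f trm" "'f trm"
  | Neg "('f, 'p) fm"
  | Conj "('f, 'p) fm" "('f, 'p) fm"
  | Ex nat "('f, 'p) fm"

record ('a, 'f, 'p) struc =
  dom :: "'a set"
  fint :: "'f \<Rightarrow> 'a list \<Rightarrow> 'a"
  pint :: "'p \<Rightarrow> 'a list \<Rightarrow> bool"

definition is_struc :: "('a, 'f, 'p) struc \<Rightarrow> bool" where
  "is_struc M \<longleftrightarrow> dom M \<noteq> {} \<and>
     (\<forall>f as. set as \<subseteq> dom M \<longrightarrow> fint M f as \<in> dom M)"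

fun eval_trm :: "('a, 'f, 'p) struc \<Rightarrow> (nat \<Rightarrow> 'a) \<Rightarrow> 'f trm \<Rightarrow> 'a" where
  "eval_trm M v (Var n) = v n"
| "eval_trm M v (Fun f ts) = fint M f (map (eval_trm M v) ts)"

fun sat :: "('a, 'f, 'p) struc \<Rightarrow> (nat \<Rightarrow> 'a) \<Rightarrow> ('f, 'p) fm \<Rightarrow> bool" where
  "sat M v FF = False"
| "sat M v (Atom p ts) = pint M p (map (eval_trm M v) ts)"
| "sat M v (Eq s t) = (eval_trm M v s = eval_trm M v t)"
| "sat M v (Neg \<phi>) = (\<not> sat M v \<phi>)"
| "sat M v (Conj \<phi> \<psi>) = (sat M v \<phi> \<and> sat M v \<psi>)"
| "sat M v (Ex n \<phi>) = (\<exists>a\<in>dom M. sat M (v(n := a)) \<phi>)"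

fun fv_trm :: "'f trm \<Rightarrow> nat set" where
  "fv_trm (Var n) = {n}"
| "fv_trm (Fun f ts) = (\<Union>t\<in>set ts. fv_trm t)"

fun fv :: "('f, 'p) fm \<Rightarrow> nat set" where
  "fv FF = {}"
| "fv (Atom p ts) = (\<Union>t\<in>set ts. fv_trm t)"
| "fv (Eq s t) = fv_trm s \<union> fv_trm t"
| "fv (Neg \<phi>) = fv \<phi>"
| "fv (Conj \<phi> \<psi>) = fv \<phi> \<union> fv \<psi>"
| "fv (Ex n \<phi>) = fv \<phi> - {n}"

definition sentence :: "('f, 'p) fm \<Rightarrow> bool" where
  "sentence \<phi> \<longleftrightarrow> fv \<phi> = {}"

definition valuation :: "('a, 'f, 'p) struc \<Rightarrow> (nat \<Rightarrow> 'a) \<Rightarrow> bool" where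
  "valuation M v \<longleftrightarrow> (\<forall>n. v n \<in> dom M)"

definition is_model :: "('a, 'f, 'p) struc \<Rightarrow> ('f, 'p) fm set \<Rightarrow> bool" where
  "is_model M T \<longleftrightarrow> is_struc M \<and>
     (\<forall>\<sigma>\<in>T. \<forall>v. valuation M v \<longrightarrow> sat M v \<sigma>)"

text \<open>Completeness of a theory T (a set of sentences), with respect to models
living in the type 'a.\<close>
definition complete_theory :: "'a itself \<Rightarrow> ('f, 'p) fm set \<Rightarrow> bool" where
  "complete_theory TYPE('a) T \<longleftrightarrow> (\<forall>\<sigma>\<in>T. sentence \<sigma>) \<and>
     (\<forall>\<sigma>. sentence \<sigma> \<longrightarrow>
        (\<forall>N :: ('a, 'f, 'p) struc. is_model N T \<longrightarrow> (\<forall>v. valuation N v \<longrightarrow> sat N v \<sigma>)) \<or>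
        (\<forall>N :: ('a, 'f, 'p) struc. is_model N T \<longrightarrow> (\<forall>v. valuation N v \<longrightarrow> \<not> sat N v \<sigma>)))"

definition dflt :: "('a, 'f, 'p) struc \<Rightarrow> nat \<Rightarrow> 'a" where
  "dflt M = (\<lambda>_. SOME a. a \<in> dom M)"

definition inst :: "(nat \<Rightarrow> 'a) \<Rightarrow> nat list \<Rightarrow> 'a list \<Rightarrow> nat \<Rightarrow> 'a" where
  "inst v xs as n = (case map_of (zip xs as) n of Some a \<Rightarrow> a | None \<Rightarrow> v n)"

text \<open>The partitioned formula (U ; fv phi - U) is NIP in M: for some N there is
no family a_i (i<N) of assignments to the second group and b_S (S subset of {..<N})
of assignments to the first group with phi(b_S; a_i) iff i in S.\<close>
definition nip_part :: "('a, 'f, 'p) struc \<Rightarrow> ('f, 'p) fm \<Rightarrow> nat set \<Rightarrow> bool" where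
  "nip_part M \<phi> U \<longleftrightarrow> (\<exists>N::nat. \<not> (\<exists>(a :: nat \<Rightarrow> nat \<Rightarrow> 'a) (b :: nat set \<Rightarrow> nat \<Rightarrow> 'a).
      (\<forall>i. valuation M (a i)) \<and> (\<forall>S. valuation M (b S)) \<and>
      (\<forall>i<N. \<forall>S\<subseteq>{..<N}.
         sat M (\<lambda>n. if n \<in> U then b S n else a i n) \<phi> \<longleftrightarrow> i \<in> S)))"

definition nip :: "('a, 'f, 'p) struc \<Rightarrow> ('f, 'p) fm \<Rightarrow> bool" where
  "nip M \<phi> \<longleftrightarrow> (\<forall>U\<subseteq>fv \<phi>. nip_part M \<phi> U)"

definition same_qftp_over ::
  "nat \<Rightarrow> (nat \<Rightarrow> nat) \<Rightarrow> (nat \<Rightarrow> nat) \<Rightarrow> nat \<Rightarrow> (nat \<Rightarrow> nat) \<Rightarrow> bool" where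
  "same_qftp_over m u v d w \<longleftrightarrow>
     (\<forall>t<m. \<forall>t'<m. (u t < u t' \<longleftrightarrow> v t < v t') \<and> (u t = u t' \<longleftrightarrow> v t = v t')) \<and>
     (\<forall>t<m. \<forall>e<d. (u t < w e \<longleftrightarrow> v t < w e) \<and> (u t = w e \<longleftrightarrow> v t = w e) \<and>
                    (w e < u t \<longleftrightarrow> w e < v t))"

definition same_qftp :: "nat \<Rightarrow> (nat \<Rightarrow> nat) \<Rightarrow> (nat \<Rightarrow> nat) \<Rightarrow> bool" where
  "same_qftp m u v \<longleftrightarrow> same_qftp_over m u v 0 (\<lambda>_. 0)"

text \<open>Index set I_1 x ... x I_k where I_s = {0..<n!s}, k = length n.\<close>
definition idx :: "nat list \<Rightarrow> nat list set" where
  "idx n = {is. length is = length n \<and> (\<forall>s<length n. is ! s < n ! s)}"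

text \<open>A set Delta of formulas psi(z_1,...,z_m): pairs (psi, [z_1,...,z_m]) where
the z_t are tuples of distinct variables, each of length len.\<close>
definition wf_Delta :: "nat \<Rightarrow> (('f, 'p) fm \<times> nat list list) set \<Rightarrow> bool" where
  "wf_Delta len \<Delta> \<longleftrightarrow> finite \<Delta> \<and>
     (\<forall>(\<psi>, zs)\<in>\<Delta>. distinct (concat zs) \<and> (\<forall>z\<in>set zs. length z = len) \<and>
        fv \<psi> \<subseteq> (\<Union>z\<in>set zs. set z))"

definition delta_indisc ::
  "('a, 'f, 'p) struc \<Rightarrow> (('f, 'p) fm \<times> nat list list) set \<Rightarrow> nat list \<Rightarrow> (nat list \<Rightarrow> 'a list) \<Rightarrow> bool" where
  "delta_indisc M \<Delta> n a \<longleftrightarrow>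
     (\<forall>(\<psi>, zs)\<in>\<Delta>. \<forall>i0 i1 :: nat \<Rightarrow> nat list.
        (\<forall>t<length zs. i0 t \<in> idx n \<and> i1 t \<in> idx n) \<and>
        (\<forall>s<length n. same_qftp (length zs) (\<lambda>t. i0 t ! s) (\<lambda>t. i1 t ! s)) \<longrightarrow>
        (sat M (inst (dflt M) (concat zs) (concat (map (\<lambda>t. a (i0 t)) [0..<length zs]))) \<psi>
         \<longleftrightarrow> sat M (inst (dflt M) (concat zs) (concat (map (\<lambda>t. a (i1 t)) [0..<length zs]))) \<psi>))"

end

theory Submission
  imports Defs "HOL-Library.Nat_Bijection"
begin



fun ren_trm :: "(nat \<Rightarrow> nat) \<Rightarrow> 'f trm \<Rightarrow> 'f trm" where
  "ren_trm g (Var k) = Var (g k)"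
| "ren_trm g (Fun h ts) = Fun h (map (ren_trm g) ts)"

fun ren :: "(nat \<Rightarrow> nat) \<Rightarrow> ('f, 'p) fm \<Rightarrow> ('f, 'p) fm" where
  "ren g FF = FF"
| "ren g (Atom P ts) = Atom P (map (ren_trm g) ts)"
| "ren g (Eq s t) = Eq (ren_trm g s) (ren_trm g t)"
| "ren g (Neg \<psi>) = Neg (ren g \<psi>)"
| "ren g (Conj \<psi> \<chi>) = Conj (ren g \<psi>) (ren g \<chi>)"
| "ren g (Ex k \<psi>) = Ex (g k) (ren g \<psi>)"

lemma eval_ren_trm: "eval_trm M v (ren_trm g t) = eval_trm M (v \<circ> g) t"
  by (induction t) (auto cong: map_cong)

lemma sat_ren: "inj g \<Longrightarrow> sat M v (ren g \<psi>) = sat M (v \<circ> g) \<psi>"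
proof (induction \<psi> arbitrary: v)
  case (Ex k \<psi>)
  have "\<And>c. (v(g k := c)) \<circ> g = (v \<circ> g)(k := c)"
    using Ex.prems by (auto simp: fun_eq_iff inj_eq)
  then have "\<And>c. sat M (v(g k := c)) (ren g \<psi>) = sat M ((v \<circ> g)(k := c)) \<psi>"
    using Ex.IH[OF Ex.prems] by metis
  then show ?case by (simp only: sat.simps ren.simps)
qed (auto simp: eval_ren_trm comp_def)

lemma fv_trm_ren: "fv_trm (ren_trm g t) = g ` fv_trm t"
  by (induction t) auto

lemma fv_ren: "fv (ren g \<psi>) \<subseteq> g ` fv \<psi>"
  by (induction \<psi>) (auto simp: fv_trm_ren)

lemma eval_trm_cong: "(\<forall>w\<in>fv_trm t. v w = v' w) \<Longrightarrow> eval_trm M v t = eval_trm M v' t"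
  by (induction t) (auto cong: map_cong)

lemma sat_cong: "(\<forall>w\<in>fv \<psi>. v w = v' w) \<Longrightarrow> sat M v \<psi> = sat M v' \<psi>"
proof (induction \<psi> arbitrary: v v')
  case (Atom P ts)
  then have "\<forall>t\<in>set ts. eval_trm M v t = eval_trm M v' t"
    by (auto intro: eval_trm_cong)
  then have "map (eval_trm M v) ts = map (eval_trm M v') ts"
    by (simp add: map_eq_conv)
  then show ?case by (simp only: sat.simps)
next
  case (Eq s t)
  then show ?case using eval_trm_cong[of s v v' M] eval_trm_cong[of t v v' M] by auto
next
  case (Ex k \<psi>)
  have "\<And>c. sat M (v(k := c)) \<psi> = sat M (v'(k := c)) \<psi>"
    by (rule Ex.IH) (use Ex.prems in auto)
  then show ?case by simp
next
  case (Conj \<psi>1 \<psi>2)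
  have "sat M v \<psi>1 = sat M v' \<psi>1" by (rule Conj.IH(1)) (use Conj.prems in auto)
  moreover have "sat M v \<psi>2 = sat M v' \<psi>2" by (rule Conj.IH(2)) (use Conj.prems in auto)
  ultimately show ?case by simp
qed auto

fun Exs :: "nat list \<Rightarrow> ('f, 'p) fm \<Rightarrow> ('f, 'p) fm" where
  "Exs [] \<psi> = \<psi>"
| "Exs (k # ks) \<psi> = Ex k (Exs ks \<psi>)"

lemma fv_Exs: "fv (Exs ks \<psi>) = fv \<psi> - set ks"
  by (induction ks) auto

lemma Exs_intro:
  assumes "\<forall>w\<in>set ks. v' w \<in> dom M" "\<forall>w. w \<notin> set ks \<longrightarrow> v' w = v w" "sat M v' \<psi>"
  shows "sat M v (Exs ks \<psi>)"
  using assms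
proof (induction ks arbitrary: v)
  case Nil
  then have "v' = v" by auto
  then show ?case using Nil by simp
next
  case (Cons k ks)
  have "sat M (v(k := v' k)) (Exs ks \<psi>)"
    by (rule Cons.IH) (use Cons.prems in auto)
  then show ?case using Cons.prems by auto
qed

lemma Exs_elim:
  assumes "sat M v (Exs ks \<psi>)" "valuation M v"
  shows "\<exists>v'. valuation M v' \<and> (\<forall>w. w \<notin> set ks \<longrightarrow> v' w = v w) \<and> sat M v' \<psi>"
  using assms
proof (induction ks arbitrary: v)
  case Nil
  then show ?case by auto
next
  case (Cons k ks)
  then obtain c where c: "c \<in> dom M" "sat M (v(k := c)) (Exs ks \<psi>)" by auto
  have "valuation M (v(k := c))" using Cons.prems c by (auto simp: valuation_def)
  then obtain v' where "valuation M v'" "\<forall>w. w \<notin> set ks \<longrightarrow> v' w = (v(k := c)) w" "sat M v' \<psi>"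
    using Cons.IH c by blast
  then show ?case by auto
qed

fun Conjs :: "('f, 'p) fm list \<Rightarrow> ('f, 'p) fm" where
  "Conjs [] = Neg FF"
| "Conjs (\<psi> # l) = Conj \<psi> (Conjs l)"

lemma sat_Conjs: "sat M v (Conjs l) = (\<forall>\<psi>\<in>set l. sat M v \<psi>)"
  by (induction l) auto

lemma fv_Conjs: "fv (Conjs l) = (\<Union>\<psi>\<in>set l. fv \<psi>)"
  by (induction l) auto

lemma inst_in:
  assumes "distinct ks" "length ks = length cs" "(k, c) \<in> set (zip ks cs)"
  shows "inst v ks cs k = c"
proof -
  have "map_of (zip ks cs) k = Some c"
    using assms by (intro map_of_is_SomeI) auto
  then show ?thesis by (simp add: inst_def)
qed

lemma inst_out: "k \<notin> set ks \<Longrightarrow> inst v ks cs k = v k"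
proof -
  assume "k \<notin> set ks"
  then have "map_of (zip ks cs) k = None"
    by (auto simp: map_of_eq_None_iff dest: set_zip_leftD)
  then show ?thesis by (simp add: inst_def)
qed

lemma inst_valuation:
  assumes "valuation M v" "set cs \<subseteq> dom M"
  shows "valuation M (inst v ks cs)"
  unfolding valuation_def
proof
  fix k
  show "inst v ks cs k \<in> dom M"
  proof (cases "map_of (zip ks cs) k")
    case None
    then show ?thesis using assms by (simp add: inst_def valuation_def)
  next
    case (Some c)
    then have "(k, c) \<in> set (zip ks cs)" by (rule map_of_SomeD)
    then have "c \<in> set cs" by (rule set_zip_rightD)
    then show ?thesis using Some assms by (auto simp: inst_def)
  qed
qed

lemma dflt_valuation: "dom M \<noteq> {} \<Longrightarrow> valuation M (dflt M)"
  unfolding valuation_def dflt_def by (auto intro: someI_ex)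

lemma concat_len_eq:
  "list_all2 (\<lambda>z c. length z = length c) zs cs \<Longrightarrow> length (concat zs) = length (concat cs)"
  by (induction rule: list_all2_induct) auto

lemma zip_concat_mem:
  assumes "list_all2 (\<lambda>z c. length z = length c) zs cs" "m < length zs" "\<kappa> < length (zs ! m)"
  shows "(zs ! m ! \<kappa>, cs ! m ! \<kappa>) \<in> set (zip (concat zs) (concat cs))"
  using assms
proof (induction arbitrary: m rule: list_all2_induct)
  case Nil
  then show ?case by simp
next
  case (Cons z zs c cs)
  show ?case
  proof (cases m)
    case 0
    then show ?thesis using Cons by (auto simp: zip_append set_zip)
  next
    case (Suc m')
    then have "(zs ! m' ! \<kappa>, cs ! m' ! \<kappa>) \<in> set (zip (concat zs) (concat cs))"
      using Cons by auto
    then show ?thesis using Suc Cons by (auto simp: zip_append)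
  qed
qed

lemma nth_concat_blocks:
  assumes "\<forall>\<tau><N. length (L \<tau>) = r" "m < N * r"
  shows "concat (map L [0..<N]) ! m = L (m div r) ! (m mod r)"
  using assms
proof (induction N arbitrary: m)
  case 0
  then show ?case by simp
next
  case (Suc N)
  have len: "length (concat (map L [0..<N])) = N * r"
  proof -
    have e: "map (\<lambda>x. length (L x)) [0..<N] = map (\<lambda>x. r) [0..<N]"
      using Suc.prems by (intro map_cong) auto
    have "length (concat (map L [0..<N])) = sum_list (map (\<lambda>x. length (L x)) [0..<N])"
      by (simp add: length_concat comp_def)
    also have "\<dots> = sum_list (map (\<lambda>x. r) [0..<N])" by (simp only: e)
    also have "\<dots> = N * r" by (simp add: sum_list_triv)
    finally show ?thesis .
  qed
  show ?case
  proof (cases "m < N * r")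
    case True
    then show ?thesis using Suc by (simp add: nth_append len)
  next
    case False
    have d: "m div r = N"
      using Suc.prems False by (intro div_nat_eqI) (auto simp: mult.commute)
    then have "m mod r = m - N * r"
      by (simp add: minus_div_mult_eq_mod [symmetric])
    note d this
    then show ?thesis using False Suc.prems by (simp add: nth_append len)
  qed
qed




lemma nbhd_card:
  assumes "finite A" "card A \<le> r"
  shows "finite {q. q \<in> A \<or> Suc q \<in> A} \<and> card {q. q \<in> A \<or> Suc q \<in> A} \<le> 2 * r"
proof -
  have sub: "{q. q \<in> A \<or> Suc q \<in> A} \<subseteq> A \<union> (\<lambda>c. c - 1) ` A"
    by (auto intro: image_eqI[where x = "Suc _"])
  have fin: "finite (A \<union> (\<lambda>c. c - 1) ` A)" using assms by simp
  have "card (A \<union> (\<lambda>c. c - 1) ` A) \<le> card A + card ((\<lambda>c. c - 1) ` A)" by (rule card_Un_le)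
  also have "\<dots> \<le> r + r" using assms card_image_le[OF assms(1), of "\<lambda>c. c - 1"] by linarith
  finally show ?thesis using card_mono[OF fin sub] finite_subset[OF sub fin] by simp
qed

lemma indep:
  fixes W :: "nat \<Rightarrow> nat set"
  assumes "finite P" "(4 * r + 1) * N \<le> card P" "\<forall>p\<in>P. finite (W p) \<and> card (W p) \<le> r"
  shows "\<exists>Q\<subseteq>P. card Q = N \<and> (\<forall>p\<in>Q. \<forall>q\<in>Q. p \<noteq> q \<longrightarrow> q \<notin> W p \<and> Suc q \<notin> W p)"
  using assms
proof (induction N arbitrary: P)
  case 0
  then show ?case by (intro exI[of _ "{}"]) auto
next
  case (Suc N)
  define R where "R p q \<longleftrightarrow> q \<in> W p \<or> Suc q \<in> W p" for p q
  have out: "finite {q. R p q} \<and> card {q. R p q} \<le> 2 * r" if "p \<in> P" for p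
    using nbhd_card[of "W p" r] Suc.prems(3) that unfolding R_def by auto
  have Ppos: "card P > 0" using Suc.prems(2) by simp
  have "\<exists>q\<in>P. card (P \<inter> {p. R p q}) \<le> 2 * r"
  proof (rule ccontr)
    assume "\<not> ?thesis"
    then have big: "\<forall>q\<in>P. 2 * r + 1 \<le> card (P \<inter> {p. R p q})" by auto
    have "card P * (2 * r + 1) = (\<Sum>q\<in>P. 2 * r + 1)" by simp
    also have "\<dots> \<le> (\<Sum>q\<in>P. card (P \<inter> {p. R p q}))" by (rule sum_mono) (use big in auto)
    also have "\<dots> = (\<Sum>q\<in>P. \<Sum>p\<in>P. of_bool (R p q))" using Suc.prems(1) by simp
    also have "\<dots> = (\<Sum>p\<in>P. \<Sum>q\<in>P. of_bool (R p q))" by (rule sum.swap)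
    also have "\<dots> = (\<Sum>p\<in>P. card (P \<inter> {q. R p q}))" using Suc.prems(1) by simp
    also have "\<dots> \<le> (\<Sum>p\<in>P. 2 * r)"
    proof (rule sum_mono)
      fix p assume "p \<in> P"
      then show "card (P \<inter> {q. R p q}) \<le> 2 * r"
        using out[of p] card_mono[of "{q. R p q}" "P \<inter> {q. R p q}"] by auto
    qed
    also have "\<dots> = card P * (2 * r)" by simp
    finally show False using Ppos by simp
  qed
  then obtain q where q: "q \<in> P" "card (P \<inter> {p. R p q}) \<le> 2 * r" by blast
  define X where "X = insert q ((P \<inter> {p. R p q}) \<union> {p. R q p})"
  define P' where "P' = P - X"
  have finX: "finite X" unfolding X_def using out[OF q(1)] Suc.prems(1) by auto
  have "card X \<le> 1 + (card (P \<inter> {p. R p q}) + card {p. R q p})"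
  proof -
    have "card X \<le> Suc (card ((P \<inter> {p. R p q}) \<union> {p. R q p}))"
      unfolding X_def using Suc.prems(1) out[OF q(1)] by (simp add: card_insert_if)
    then show ?thesis using card_Un_le[of "P \<inter> {p. R p q}" "{p. R q p}"] by linarith
  qed
  then have cX: "card X \<le> 4 * r + 1" using q(2) out[OF q(1)] by linarith
  have "card P \<le> card (P' \<union> X)" using Suc.prems(1) finX by (intro card_mono) (auto simp: P'_def)
  also have "\<dots> \<le> card P' + card X" by (rule card_Un_le)
  finally have "(4 * r + 1) * N \<le> card P'" using Suc.prems(2) cX by simp
  moreover have "finite P'" using Suc.prems(1) by (simp add: P'_def)
  moreover have "\<forall>p\<in>P'. finite (W p) \<and> card (W p) \<le> r" using Suc.prems(3) by (auto simp: P'_def)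
  ultimately obtain Q where Q: "Q \<subseteq> P'" "card Q = N"
    "\<forall>p\<in>Q. \<forall>q\<in>Q. p \<noteq> q \<longrightarrow> q \<notin> W p \<and> Suc q \<notin> W p"
    using Suc.IH by blast
  have qQ: "q \<notin> Q" using Q(1) by (auto simp: P'_def X_def)
  have finQ: "finite Q" using Q(1) \<open>finite P'\<close> finite_subset by blast
  show ?case
  proof (intro exI[of _ "insert q Q"] conjI)
    show "insert q Q \<subseteq> P" using Q(1) q(1) by (auto simp: P'_def)
    show "card (insert q Q) = Suc N" using qQ finQ Q(2) by simp
    show "\<forall>p\<in>insert q Q. \<forall>q'\<in>insert q Q. p \<noteq> q' \<longrightarrow> q' \<notin> W p \<and> Suc q' \<notin> W p"
      using Q(1,3) q(1) by (auto simp: P'_def X_def R_def)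
  qed
qed




definition dd :: "nat \<Rightarrow> nat \<Rightarrow> nat" where "dd p q = (p - q) + (q - p)"

lemma qftp_sym: "same_qftp_over m u v d w \<Longrightarrow> same_qftp_over m v u d w"
  unfolding same_qftp_over_def by blast

locale setting =
  fixes M :: "('a, 'f, 'p) struc" and \<phi> :: "('f, 'p) fm" and x :: "nat list"
    and ys :: "nat list list" and n :: "nat list" and a :: "nat list \<Rightarrow> 'a list" and b :: "'a list"
begin

definition T :: "(nat \<Rightarrow> nat list) \<Rightarrow> bool" where
  "T i = sat M (inst (dflt M) (x @ concat ys) (b @ concat (map (\<lambda>t. a (i t)) [0..<length ys]))) \<phi>"

definition ok :: "(nat \<Rightarrow> nat list) \<Rightarrow> bool" where
  "ok i \<longleftrightarrow> (\<forall>t<length ys. i t \<in> idx n)"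

definition mv :: "nat \<Rightarrow> nat \<Rightarrow> (nat \<Rightarrow> nat list) \<Rightarrow> nat \<Rightarrow> nat list" where
  "mv s q i = (\<lambda>t. if i t ! s = q then (i t)[s := Suc q] else i t)"

definition good :: "nat \<Rightarrow> nat \<Rightarrow> bool" where
  "good s q \<longleftrightarrow> (\<forall>i. ok i \<and> (\<forall>t<length ys. i t ! s \<noteq> Suc q) \<longrightarrow> T (mv s q i) = T i)"

definition CP :: "nat \<Rightarrow> nat set" where
  "CP s = {q. Suc q < n ! s \<and> \<not> good s q}"

lemma T_cong: "(\<forall>t<length ys. i t = i' t) \<Longrightarrow> T i = T i'"
proof -
  assume h: "\<forall>t<length ys. i t = i' t"
  have "map (\<lambda>t. a (i t)) [0..<length ys] = map (\<lambda>t. a (i' t)) [0..<length ys]"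
    using h by (intro map_cong) auto
  then show ?thesis unfolding T_def by (simp only:)
qed

lemma mv_nth:
  assumes "s < length (i t)"
  shows "mv s q i t ! s = (if i t ! s = q then Suc q else i t ! s)"
    and "s' \<noteq> s \<Longrightarrow> mv s q i t ! s' = i t ! s'"
  using assms by (auto simp: mv_def)

lemma mv_ok:
  assumes "ok i" "s < length n" "Suc q < n ! s"
  shows "ok (mv s q i)"
  using assms unfolding ok_def idx_def mv_def by (auto simp: nth_list_update)

lemma step:
  assumes s: "s < length n"
    and goodW: "\<forall>q. Suc q < n ! s \<and> q \<notin> w ` {..<d} \<longrightarrow> good s q"
    and ok0: "ok i0" and ok1: "ok i1"
    and same: "\<forall>t<length ys. \<forall>s'<length n. s' \<noteq> s \<longrightarrow> i0 t ! s' = i1 t ! s'"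
    and qf: "same_qftp_over (length ys) (\<lambda>t. i0 t ! s) (\<lambda>t. i1 t ! s) d w"
    and ex: "\<exists>t<length ys. i0 t ! s < i1 t ! s"
  shows "\<exists>i0'. ok i0' \<and> T i0' = T i0 \<and> (\<forall>t<length ys. \<forall>s'<length n. s' \<noteq> s \<longrightarrow> i0' t ! s' = i1 t ! s') \<and>
    same_qftp_over (length ys) (\<lambda>t. i0' t ! s) (\<lambda>t. i1 t ! s) d w \<and>
    (\<Sum>t<length ys. dd (i0' t ! s) (i1 t ! s)) < (\<Sum>t<length ys. dd (i0 t ! s) (i1 t ! s))"
proof -
  define r where "r = length ys"
  define u where "u t = i0 t ! s" for t
  define v where "v t = i1 t ! s" for t
  have ord: "\<forall>t<r. \<forall>t'<r. (u t < u t' \<longleftrightarrow> v t < v t') \<and> (u t = u t' \<longleftrightarrow> v t = v t')"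
    and par: "\<forall>t<r. \<forall>e<d. (u t < w e \<longleftrightarrow> v t < w e) \<and> (u t = w e \<longleftrightarrow> v t = w e) \<and>
                    (w e < u t \<longleftrightarrow> w e < v t)"
    using qf unfolding same_qftp_over_def u_def v_def r_def by auto
  define A where "A = {u t | t. t < r \<and> u t < v t}"
  have finA: "finite A" unfolding A_def by simp
  have neA: "A \<noteq> {}" using ex unfolding A_def u_def v_def r_def by auto
  define q where "q = Max A"
  have "q \<in> A" unfolding q_def using finA neA by simp
  then obtain t0 where t0: "t0 < r" "u t0 = q" "q < v t0" unfolding A_def by auto
  have hmax: "\<forall>t<r. u t < v t \<longrightarrow> u t \<le> q"
    unfolding q_def using finA by (auto simp: A_def intro!: Max_ge)
  have F2: "\<forall>t<r. u t = q \<longrightarrow> v t = v t0" using ord t0 by metis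
  have F3: "\<forall>t<r. u t \<noteq> Suc q"
  proof (intro allI impI)
    fix t assume t: "t < r"
    show "u t \<noteq> Suc q"
    proof
      assume "u t = Suc q"
      then have "u t0 < u t" using t0 by simp
      then have "v t0 < v t" using ord t0(1) t by blast
      then have "u t < v t" using \<open>u t = Suc q\<close> t0 by simp
      then show False using hmax t \<open>u t = Suc q\<close> by fastforce
    qed
  qed
  have F4: "q \<notin> w ` {..<d}" "Suc q \<notin> w ` {..<d}"
  proof -
    show "q \<notin> w ` {..<d}"
    proof
      assume "q \<in> w ` {..<d}"
      then obtain e where "e < d" "w e = q" by auto
      then show False using par t0 by fastforce
    qed
    show "Suc q \<notin> w ` {..<d}"
    proof
      assume "Suc q \<in> w ` {..<d}"
      then obtain e where e: "e < d" "w e = Suc q" by auto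
      then have "u t0 < w e" using t0 by simp
      then have "v t0 < w e" using par t0(1) e(1) by blast
      then show False using e t0 by simp
    qed
  qed
  have lenn: "\<forall>t<r. length (i0 t) = length n \<and> length (i1 t) = length n"
    using ok0 ok1 unfolding ok_def idx_def r_def by auto
  have F5: "Suc q < n ! s"
  proof -
    have "v t0 < n ! s" using ok1 t0(1) s unfolding ok_def idx_def v_def r_def by auto
    then show ?thesis using t0 by simp
  qed
  have gq: "good s q" using goodW F5 F4(1) by blast
  define i0' where "i0' = mv s q i0"
  have T': "T i0' = T i0"
    using gq ok0 F3 unfolding good_def i0'_def u_def r_def by blast
  have u': "\<forall>t<r. i0' t ! s = (if u t = q then Suc q else u t)"
    using lenn s unfolding i0'_def u_def by (auto simp: mv_nth)
  have ok': "ok i0'" unfolding i0'_def by (rule mv_ok[OF ok0 s F5])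
  have same': "\<forall>t<r. \<forall>s'<length n. s' \<noteq> s \<longrightarrow> i0' t ! s' = i1 t ! s'"
    using same lenn s unfolding i0'_def r_def by (auto simp: mv_nth)
  have qf': "same_qftp_over r (\<lambda>t. i0' t ! s) v d w"
    unfolding same_qftp_over_def
  proof (intro conjI allI impI)
    fix t t' assume tt: "t < r" "t' < r"
    have a1: "u t \<noteq> Suc q" "u t' \<noteq> Suc q" using F3 tt by auto
    have "(i0' t ! s < i0' t' ! s) = (u t < u t')" using u' tt a1 by auto
    then show "(i0' t ! s < i0' t' ! s) = (v t < v t')" using ord tt by blast
    have "(i0' t ! s = i0' t' ! s) = (u t = u t')" using u' tt a1 by auto
    then show "(i0' t ! s = i0' t' ! s) = (v t = v t')" using ord tt by blast
  next
    fix t e assume te: "t < r" "e < d"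
    have "w e \<noteq> q" "w e \<noteq> Suc q" using F4 te(2) by (metis image_eqI lessThan_iff)+
    then have "(i0' t ! s < w e) = (u t < w e)" "(i0' t ! s = w e) = (u t = w e)"
      "(w e < i0' t ! s) = (w e < u t)"
      using te u' by auto
    then show "(i0' t ! s < w e) = (v t < w e)" "(i0' t ! s = w e) = (v t = w e)"
      "(w e < i0' t ! s) = (w e < v t)"
      using par te by blast+
  qed
  have dec: "(\<Sum>t<r. dd (i0' t ! s) (v t)) < (\<Sum>t<r. dd (u t) (v t))"
  proof (rule sum_strict_mono_ex1)
    show "finite {..<r}" by simp
    show "\<forall>t\<in>{..<r}. dd (i0' t ! s) (v t) \<le> dd (u t) (v t)"
    proof
      fix t assume "t \<in> {..<r}"
      then have t: "t < r" by simp
      show "dd (i0' t ! s) (v t) \<le> dd (u t) (v t)"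
      proof (cases "u t = q")
        case True
        then have "v t = v t0" using F2 t by simp
        then show ?thesis using True u' t t0 by (simp add: dd_def)
      next
        case False
        then show ?thesis using u' t by simp
      qed
    qed
    show "\<exists>t\<in>{..<r}. dd (i0' t ! s) (v t) < dd (u t) (v t)"
      using t0 u' by (intro bexI[of _ t0]) (auto simp: dd_def)
  qed
  show ?thesis
    using ok' T' same' qf' dec unfolding r_def u_def v_def by blast
qed

lemma slide:
  assumes s: "s < length n"
    and goodW: "\<forall>q. Suc q < n ! s \<and> q \<notin> w ` {..<d} \<longrightarrow> good s q"
    and ok0: "ok i0" and ok1: "ok i1"
    and same: "\<forall>t<length ys. \<forall>s'<length n. s' \<noteq> s \<longrightarrow> i0 t ! s' = i1 t ! s'"
    and qf: "same_qftp_over (length ys) (\<lambda>t. i0 t ! s) (\<lambda>t. i1 t ! s) d w"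
  shows "T i0 = T i1"
proof -
  have "\<forall>i0 i1. ok i0 \<and> ok i1 \<and> (\<forall>t<length ys. \<forall>s'<length n. s' \<noteq> s \<longrightarrow> i0 t ! s' = i1 t ! s') \<and>
     same_qftp_over (length ys) (\<lambda>t. i0 t ! s) (\<lambda>t. i1 t ! s) d w \<and>
     (\<Sum>t<length ys. dd (i0 t ! s) (i1 t ! s)) = D \<longrightarrow> T i0 = T i1" for D
  proof (induction D rule: less_induct)
    case (less D)
    show ?case
    proof (intro allI impI, elim conjE)
      fix i0 i1
      assume ok0: "ok i0" and ok1: "ok i1"
        and same: "\<forall>t<length ys. \<forall>s'<length n. s' \<noteq> s \<longrightarrow> i0 t ! s' = i1 t ! s'"
        and qf: "same_qftp_over (length ys) (\<lambda>t. i0 t ! s) (\<lambda>t. i1 t ! s) d w"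
        and D: "(\<Sum>t<length ys. dd (i0 t ! s) (i1 t ! s)) = D"
      show "T i0 = T i1"
      proof (cases "\<exists>t<length ys. i0 t ! s < i1 t ! s")
        case True
        from step[OF s goodW ok0 ok1 same qf True] obtain i0' where
          i0': "ok i0'" "T i0' = T i0" "\<forall>t<length ys. \<forall>s'<length n. s' \<noteq> s \<longrightarrow> i0' t ! s' = i1 t ! s'"
          "same_qftp_over (length ys) (\<lambda>t. i0' t ! s) (\<lambda>t. i1 t ! s) d w"
          "(\<Sum>t<length ys. dd (i0' t ! s) (i1 t ! s)) < (\<Sum>t<length ys. dd (i0 t ! s) (i1 t ! s))"
          by blast
        then have "T i0' = T i1" using less.IH[OF i0'(5)[unfolded D]] ok1 by blast
        then show ?thesis using i0'(2) by simp
      next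
        case False
        show ?thesis
        proof (cases "\<exists>t<length ys. i1 t ! s < i0 t ! s")
          case True
          have same2: "\<forall>t<length ys. \<forall>s'<length n. s' \<noteq> s \<longrightarrow> i1 t ! s' = i0 t ! s'"
            using same by auto
          from step[OF s goodW ok1 ok0 same2 qftp_sym[OF qf] True] obtain i1' where
            i1': "ok i1'" "T i1' = T i1" "\<forall>t<length ys. \<forall>s'<length n. s' \<noteq> s \<longrightarrow> i1' t ! s' = i0 t ! s'"
            "same_qftp_over (length ys) (\<lambda>t. i1' t ! s) (\<lambda>t. i0 t ! s) d w"
            "(\<Sum>t<length ys. dd (i1' t ! s) (i0 t ! s)) < (\<Sum>t<length ys. dd (i1 t ! s) (i0 t ! s))"
            by blast
          have ddc: "dd p q = dd q p" for p q unfolding dd_def by simp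
          have lt: "(\<Sum>t<length ys. dd (i0 t ! s) (i1' t ! s)) < D"
            using i1'(5) D by (simp add: ddc)
          have "T i0 = T i1'"
            using less.IH[OF lt] ok0 i1'(1) i1'(3) qftp_sym[OF i1'(4)] by force
          then show ?thesis using i1'(2) by simp
        next
          case False2: False
          have "\<forall>t<length ys. i0 t = i1 t"
          proof (intro allI impI)
            fix t assume t: "t < length ys"
            have l: "length (i0 t) = length n" "length (i1 t) = length n"
              using ok0 ok1 t unfolding ok_def idx_def by auto
            show "i0 t = i1 t"
            proof (rule nth_equalityI)
              show "length (i0 t) = length (i1 t)" using l by simp
              fix s' assume "s' < length (i0 t)"
              then show "i0 t ! s' = i1 t ! s'"
              proof (cases "s' = s")
                case True
                have "\<not> i0 t ! s < i1 t ! s" "\<not> i1 t ! s < i0 t ! s" using False False2 t by auto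
                then show ?thesis using True by simp
              next
                case False
                then show ?thesis using same t l \<open>s' < length (i0 t)\<close> by auto
              qed
            qed
          qed
          then show ?thesis by (rule T_cong)
        qed
      qed
    qed
  qed
  then show ?thesis using ok0 ok1 same qf by blast
qed

lemma allcoords:
  assumes ok0: "ok i0" and ok1: "ok i1"
    and qfs: "\<forall>s<length n. same_qftp_over (length ys) (\<lambda>t. i0 t ! s) (\<lambda>t. i1 t ! s) d (\<lambda>e. j e ! s)"
    and goods: "\<forall>s<length n. \<forall>q. Suc q < n ! s \<and> q \<notin> (\<lambda>e. j e ! s) ` {..<d} \<longrightarrow> good s q"
  shows "T i0 = T i1"
proof -
  define h where "h m t = map (\<lambda>s. if s < m then i1 t ! s else i0 t ! s) [0..<length n]" for m t
  have l: "\<forall>t<length ys. length (i0 t) = length n \<and> length (i1 t) = length n"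
    using ok0 ok1 unfolding ok_def idx_def by auto
  have okh: "ok (h m)" for m
    using ok0 ok1 unfolding ok_def idx_def h_def by auto
  have "m \<le> length n \<Longrightarrow> T (h m) = T i0" for m
  proof (induction m)
    case 0
    have "\<forall>t<length ys. h 0 t = i0 t"
      using l by (auto simp: h_def intro!: nth_equalityI)
    then show ?case by (rule T_cong)
  next
    case (Suc m)
    have "T (h m) = T (h (Suc m))"
    proof (rule slide[of m])
      show "m < length n" using Suc.prems by simp
      show "\<forall>q. Suc q < n ! m \<and> q \<notin> (\<lambda>e. j e ! m) ` {..<d} \<longrightarrow> good m q"
        using goods Suc.prems by simp
      show "ok (h m)" "ok (h (Suc m))" by (rule okh)+
      show "\<forall>t<length ys. \<forall>s'<length n. s' \<noteq> m \<longrightarrow> h m t ! s' = h (Suc m) t ! s'"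
        by (auto simp: h_def)
      have "\<And>t. h m t ! m = i0 t ! m" "\<And>t. h (Suc m) t ! m = i1 t ! m"
        using Suc.prems by (auto simp: h_def)
      then show "same_qftp_over (length ys) (\<lambda>t. h m t ! m) (\<lambda>t. h (Suc m) t ! m) d (\<lambda>e. j e ! m)"
        using qfs Suc.prems by simp
    qed
    then show ?case using Suc by simp
  qed
  then have "T (h (length n)) = T i0" by simp
  moreover have "\<forall>t<length ys. h (length n) t = i1 t"
    using l by (auto simp: h_def intro!: nth_equalityI)
  ultimately show ?thesis using T_cong by metis
qed

end



definition fr :: "nat list \<Rightarrow> nat \<Rightarrow> nat \<Rightarrow> nat" where
  "fr x \<tau> w = (if w \<in> set x then w else Suc (sum_list x) + prod_encode (\<tau>, w))"

lemma fr_x: "w \<in> set x \<Longrightarrow> fr x \<tau> w = w"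
  by (simp add: fr_def)

lemma fr_notx: "w \<notin> set x \<Longrightarrow> fr x \<tau> w \<notin> set x"
proof
  assume "w \<notin> set x" "fr x \<tau> w \<in> set x"
  then have "fr x \<tau> w \<le> sum_list x" by (simp add: member_le_sum_list)
  then show False using \<open>w \<notin> set x\<close> by (simp add: fr_def)
qed

lemma fr_pair: "w \<notin> set x \<Longrightarrow> w' \<notin> set x \<Longrightarrow> fr x \<tau> w = fr x \<tau>' w' \<Longrightarrow> \<tau> = \<tau>' \<and> w = w'"
  by (simp add: fr_def prod_encode_eq)

lemma fr_inj: "inj (fr x \<tau>)"
proof (rule injI)
  fix w w' assume h: "fr x \<tau> w = fr x \<tau> w'"
  show "w = w'"
  proof (cases "w \<in> set x"; cases "w' \<in> set x")
    assume "w \<in> set x" "w' \<in> set x" then show ?thesis using h by (simp add: fr_x)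
  next
    assume "w \<in> set x" "w' \<notin> set x" then show ?thesis using h by (metis fr_notx fr_x)
  next
    assume "w \<notin> set x" "w' \<in> set x" then show ?thesis using h by (metis fr_notx fr_x)
  next
    assume "w \<notin> set x" "w' \<notin> set x" then show ?thesis using h fr_pair by blast
  qed
qed

definition zsD :: "nat list \<Rightarrow> nat list list \<Rightarrow> nat \<Rightarrow> nat list list" where
  "zsD x ys N = concat (map (\<lambda>\<tau>. map (map (fr x \<tau>)) ys) [0..<N])"

definition psiD :: "('f, 'p) fm \<Rightarrow> nat list \<Rightarrow> nat \<Rightarrow> nat set \<Rightarrow> ('f, 'p) fm" where
  "psiD \<phi> x N S = Exs x (Conjs (map (\<lambda>\<tau>. if \<tau> \<in> S then ren (fr x \<tau>) \<phi> else Neg (ren (fr x \<tau>) \<phi>)) [0..<N]))"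

lemma zs_len: "length (zsD x ys N) = N * length ys"
  by (induction N) (auto simp: zsD_def)

lemma zs_nth: "m < N * length ys \<Longrightarrow> zsD x ys N ! m = map (fr x (m div length ys)) (ys ! (m mod length ys))"
proof -
  assume m: "m < N * length ys"
  then have r: "length ys > 0" by (cases "length ys") auto
  have "zsD x ys N ! m = map (map (fr x (m div length ys))) ys ! (m mod length ys)"
    unfolding zsD_def by (rule nth_concat_blocks) (use m in auto)
  then show ?thesis using r by simp
qed

lemma zs_set: "set (concat (zsD x ys N)) = (\<Union>\<tau>\<in>{..<N}. fr x \<tau> ` set (concat ys))"
proof
  show "set (concat (zsD x ys N)) \<subseteq> (\<Union>\<tau>\<in>{..<N}. fr x \<tau> ` set (concat ys))"
    by (auto simp: zsD_def) (metis UN_I imageI lessThan_iff)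
  show "(\<Union>\<tau>\<in>{..<N}. fr x \<tau> ` set (concat ys)) \<subseteq> set (concat (zsD x ys N))"
  proof
    fix w assume "w \<in> (\<Union>\<tau>\<in>{..<N}. fr x \<tau> ` set (concat ys))"
    then obtain \<tau> y u where "\<tau> < N" "y \<in> set ys" "u \<in> set y" "w = fr x \<tau> u" by auto
    then show "w \<in> set (concat (zsD x ys N))"
      by (force simp: zsD_def)
  qed
qed

lemma zs_Suc: "zsD x ys (Suc N) = zsD x ys N @ map (map (fr x N)) ys"
  by (simp add: zsD_def)

lemma zs_distinct:
  assumes "distinct (x @ concat ys)"
  shows "distinct (concat (zsD x ys N))"
proof (induction N)
  case 0
  then show ?case by (simp add: zsD_def)
next
  case (Suc N)
  have d1: "distinct (map (fr x N) (concat ys))"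
    using assms fr_inj[of x N] by (simp add: distinct_map inj_on_subset[OF _ subset_UNIV])
  have disj: "set (concat (zsD x ys N)) \<inter> fr x N ` set (concat ys) = {}"
  proof -
    have "fr x \<tau> w \<noteq> fr x N w'" if "\<tau> < N" "w \<in> set (concat ys)" "w' \<in> set (concat ys)" for \<tau> w w'
    proof
      assume "fr x \<tau> w = fr x N w'"
      moreover have "w \<notin> set x" "w' \<notin> set x" using assms that by auto
      ultimately show False using fr_pair that(1) by blast
    qed
    then show ?thesis unfolding zs_set by blast
  qed
  have "concat (zsD x ys (Suc N)) = concat (zsD x ys N) @ map (fr x N) (concat ys)"
    by (simp add: zs_Suc map_concat)
  then show ?case using Suc d1 disj by simp
qed

definition DeltaD :: "('f, 'p) fm \<Rightarrow> nat list \<Rightarrow> nat list list \<Rightarrow> nat \<Rightarrow> (('f, 'p) fm \<times> nat list list) set" where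
  "DeltaD \<phi> x ys N = (\<lambda>S. (psiD \<phi> x N S, zsD x ys N)) ` Pow {..<N}"

lemma fv_psiD: "fv (psiD \<phi> x N S) \<subseteq> (\<Union>\<tau>\<in>{..<N}. fr x \<tau> ` fv \<phi>) - set x"
proof -
  have "fv (Conjs (map (\<lambda>\<tau>. if \<tau> \<in> S then ren (fr x \<tau>) \<phi> else Neg (ren (fr x \<tau>) \<phi>)) [0..<N]))
      \<subseteq> (\<Union>\<tau>\<in>{..<N}. fr x \<tau> ` fv \<phi>)"
  proof
    fix w assume "w \<in> fv (Conjs (map (\<lambda>\<tau>. if \<tau> \<in> S then ren (fr x \<tau>) \<phi> else Neg (ren (fr x \<tau>) \<phi>)) [0..<N]))"
    then obtain \<tau> where "\<tau> < N" "w \<in> fv (ren (fr x \<tau>) \<phi>)"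
      by (auto simp: fv_Conjs split: if_splits)
    then show "w \<in> (\<Union>\<tau>\<in>{..<N}. fr x \<tau> ` fv \<phi>)" using fv_ren[of "fr x \<tau>" \<phi>] by blast
  qed
  then show ?thesis unfolding psiD_def fv_Exs by blast
qed

lemma wf_DeltaD:
  assumes "distinct (x @ concat ys)" "\<forall>y\<in>set ys. length y = len"
    "fv \<phi> \<subseteq> set x \<union> (\<Union>y\<in>set ys. set y)"
  shows "wf_Delta len (DeltaD \<phi> x ys N)"
  unfolding wf_Delta_def
proof (intro conjI ballI)
  show "finite (DeltaD \<phi> x ys N)" by (simp add: DeltaD_def)
next
  fix pz assume "pz \<in> DeltaD \<phi> x ys N"
  then obtain S where pz: "pz = (psiD \<phi> x N S, zsD x ys N)" by (auto simp: DeltaD_def)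
  have d: "distinct (concat (zsD x ys N))" by (rule zs_distinct[OF assms(1)])
  have l: "\<forall>z\<in>set (zsD x ys N). length z = len" using assms(2) by (auto simp: zsD_def)
  have f: "fv (psiD \<phi> x N S) \<subseteq> (\<Union>z\<in>set (zsD x ys N). set z)"
  proof
    fix w assume w: "w \<in> fv (psiD \<phi> x N S)"
    then obtain \<tau> u where tu: "\<tau> < N" "u \<in> fv \<phi>" "w = fr x \<tau> u" "w \<notin> set x"
      using fv_psiD by blast
    have "u \<notin> set x" using tu fr_x by metis
    then have "u \<in> set (concat ys)" using tu(2) assms(3) by auto
    then have "w \<in> set (concat (zsD x ys N))" using tu unfolding zs_set by blast
    then show "w \<in> (\<Union>z\<in>set (zsD x ys N). set z)" by simp
  qed
  show "case pz of (\<psi>, zs) \<Rightarrow> distinct (concat zs) \<and> (\<forall>z\<in>set zs. length z = len) \<and>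
        fv \<psi> \<subseteq> (\<Union>z\<in>set zs. set z)"
    using pz d l f by simp
qed




lemma inst_block:
  assumes "distinct (concat zs)" "list_all2 (\<lambda>z c. length z = length c) zs cs"
    "m < length zs" "\<kappa> < length (zs ! m)"
  shows "inst v (concat zs) (concat cs) (zs ! m ! \<kappa>) = cs ! m ! \<kappa>"
  by (rule inst_in) (use assms in \<open>auto simp: concat_len_eq zip_concat_mem\<close>)

lemma idx_lt: "\<tau> < N \<Longrightarrow> \<rho> < r \<Longrightarrow> \<tau> * r + \<rho> < N * (r::nat)"
proof -
  assume a: "\<tau> < N" "\<rho> < r"
  have "\<tau> * r + \<rho> < Suc \<tau> * r" using a by simp
  also have "\<dots> \<le> N * r" using a by (intro mult_le_mono1) simp
  finally show ?thesis .
qed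

lemma divmod_blk: "\<rho> < (r::nat) \<Longrightarrow> (\<tau> * r + \<rho>) div r = \<tau> \<and> (\<tau> * r + \<rho>) mod r = \<rho>"
  by simp

locale setting2 = setting +
  fixes len :: nat and N :: nat
  assumes domne: "dom M \<noteq> {}"
    and dist: "distinct (x @ concat ys)"
    and lens: "\<forall>y\<in>set ys. length y = len"
    and fvphi: "fv \<phi> \<subseteq> set x \<union> (\<Union>y\<in>set ys. set y)"
    and arr: "\<forall>i\<in>idx n. length (a i) = len \<and> set (a i) \<subseteq> dom M"
    and blen: "length b = length x" and bdom: "set b \<subseteq> dom M"
    and indisc: "delta_indisc M (DeltaD \<phi> x ys N) n a"
    and noshat: "\<not> (\<exists>(a' :: nat \<Rightarrow> nat \<Rightarrow> 'a) (b' :: nat set \<Rightarrow> nat \<Rightarrow> 'a).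
      (\<forall>i. valuation M (a' i)) \<and> (\<forall>S. valuation M (b' S)) \<and>
      (\<forall>i<N. \<forall>S\<subseteq>{..<N}.
         sat M (\<lambda>k. if k \<in> fv \<phi> \<inter> set x then b' S k else a' i k) \<phi> \<longleftrightarrow> i \<in> S))"
begin

definition v0 :: "(nat \<Rightarrow> nat list) \<Rightarrow> nat \<Rightarrow> 'a" where
  "v0 D = inst (dflt M) (concat (zsD x ys N)) (concat (map (\<lambda>t. a (D t)) [0..<length (zsD x ys N)]))"

lemma la_zs:
  assumes Dok: "\<forall>m<N * length ys. D m \<in> idx n"
  shows "list_all2 (\<lambda>z c. length z = length c) (zsD x ys N) (map (\<lambda>t. a (D t)) [0..<length (zsD x ys N)])"
proof (rule list_all2_all_nthI)
  show "length (zsD x ys N) = length (map (\<lambda>t. a (D t)) [0..<length (zsD x ys N)])" by simp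
  fix m assume m: "m < length (zsD x ys N)"
  then have m': "m < N * length ys" by (simp add: zs_len)
  then have r: "length ys > 0" by (cases "length ys") auto
  have "length (zsD x ys N ! m) = len"
    using zs_nth[OF m'] lens r by simp
  moreover have "length (a (D m)) = len" using arr Dok m' by auto
  ultimately show "length (zsD x ys N ! m) = length (map (\<lambda>t. a (D t)) [0..<length (zsD x ys N)] ! m)"
    using m by simp
qed

lemma v0_val:
  assumes Dok: "\<forall>m<N * length ys. D m \<in> idx n"
  shows "valuation M (v0 D)"
  unfolding v0_def
proof (rule inst_valuation[OF dflt_valuation[OF domne]])
  show "set (concat (map (\<lambda>t. a (D t)) [0..<length (zsD x ys N)])) \<subseteq> dom M"
    using Dok arr by (auto simp: zs_len)
qed

lemma agree:
  assumes Dok: "\<forall>m<N * length ys. D m \<in> idx n" and \<tau>: "\<tau> < N"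
    and hv: "\<forall>w. w \<notin> set x \<longrightarrow> v' w = v0 D w"
  shows "sat M (v' \<circ> fr x \<tau>) \<phi> = sat M (inst (dflt M) (x @ concat ys)
     (map v' x @ concat (map (\<lambda>\<rho>. a (D (\<tau> * length ys + \<rho>))) [0..<length ys]))) \<phi>"
proof (rule sat_cong, intro ballI)
  fix w assume w: "w \<in> fv \<phi>"
  define zs where "zs = x # ys"
  define cs where "cs = map v' x # map (\<lambda>\<rho>. a (D (\<tau> * length ys + \<rho>))) [0..<length ys]"
  have la: "list_all2 (\<lambda>z c. length z = length c) zs cs"
    unfolding zs_def cs_def
  proof (rule list_all2_Cons[THEN iffD2], intro conjI)
    show "length x = length (map v' x)" by simp
    show "list_all2 (\<lambda>z c. length z = length c) ys (map (\<lambda>\<rho>. a (D (\<tau> * length ys + \<rho>))) [0..<length ys])"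
    proof (rule list_all2_all_nthI)
      show "length ys = length (map (\<lambda>\<rho>. a (D (\<tau> * length ys + \<rho>))) [0..<length ys])" by simp
      fix \<rho> assume \<rho>: "\<rho> < length ys"
      have "D (\<tau> * length ys + \<rho>) \<in> idx n" using Dok idx_lt[OF \<tau> \<rho>] by blast
      then have "length (a (D (\<tau> * length ys + \<rho>))) = len" using arr by blast
      moreover have "length (ys ! \<rho>) = len" using lens \<rho> by simp
      ultimately show "length (ys ! \<rho>) = length (map (\<lambda>\<rho>. a (D (\<tau> * length ys + \<rho>))) [0..<length ys] ! \<rho>)"
        using \<rho> by simp
    qed
  qed
  have dz: "distinct (concat zs)" using dist by (simp add: zs_def)
  have eqv: "inst (dflt M) (x @ concat ys) (map v' x @ concat (map (\<lambda>\<rho>. a (D (\<tau> * length ys + \<rho>))) [0..<length ys]))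
      = inst (dflt M) (concat zs) (concat cs)" by (simp add: zs_def cs_def)
  show "(v' \<circ> fr x \<tau>) w = inst (dflt M) (x @ concat ys)
     (map v' x @ concat (map (\<lambda>\<rho>. a (D (\<tau> * length ys + \<rho>))) [0..<length ys])) w"
  proof (cases "w \<in> set x")
    case True
    then obtain \<kappa> where \<kappa>: "\<kappa> < length x" "w = x ! \<kappa>" by (auto simp: in_set_conv_nth)
    have "inst (dflt M) (concat zs) (concat cs) (zs ! 0 ! \<kappa>) = cs ! 0 ! \<kappa>"
      by (rule inst_block[OF dz la]) (use \<kappa> in \<open>auto simp: zs_def\<close>)
    then have r1: "inst (dflt M) (concat zs) (concat cs) w = v' w"
      using \<kappa> by (simp add: zs_def cs_def)
    show ?thesis using True r1 by (simp add: eqv fr_x)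
  next
    case False
    then have "w \<in> set (concat ys)" using w fvphi by auto
    then obtain y where y: "y \<in> set ys" "w \<in> set y" by auto
    then obtain \<rho> where \<rho>: "\<rho> < length ys" "y = ys ! \<rho>" by (auto simp: in_set_conv_nth)
    obtain \<kappa> where \<kappa>: "\<kappa> < length (ys ! \<rho>)" "w = ys ! \<rho> ! \<kappa>" using y \<rho> by (auto simp: in_set_conv_nth)
    define m where "m = \<tau> * length ys + \<rho>"
    have m: "m < N * length ys" unfolding m_def by (rule idx_lt[OF \<tau> \<rho>(1)])
    have dm: "m div length ys = \<tau>" "m mod length ys = \<rho>" using divmod_blk[OF \<rho>(1)] by (auto simp: m_def)
    have zm: "zsD x ys N ! m = map (fr x \<tau>) (ys ! \<rho>)" using zs_nth[OF m] dm by simp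
    have "v0 D (zsD x ys N ! m ! \<kappa>) = map (\<lambda>t. a (D t)) [0..<length (zsD x ys N)] ! m ! \<kappa>"
      unfolding v0_def
      by (rule inst_block[OF zs_distinct[OF dist] la_zs[OF Dok]]) (use m \<kappa> zm in \<open>auto simp: zs_len\<close>)
    then have l1: "v0 D (fr x \<tau> w) = a (D m) ! \<kappa>" using zm \<kappa> m by (simp add: zs_len)
    have "inst (dflt M) (concat zs) (concat cs) (zs ! Suc \<rho> ! \<kappa>) = cs ! Suc \<rho> ! \<kappa>"
      by (rule inst_block[OF dz la]) (use \<rho> \<kappa> in \<open>auto simp: zs_def\<close>)
    then have l2: "inst (dflt M) (concat zs) (concat cs) w = a (D m) ! \<kappa>"
      using \<rho> \<kappa> by (simp add: zs_def cs_def m_def)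
    have "(v' \<circ> fr x \<tau>) w = v0 D (fr x \<tau> w)" using hv fr_notx[OF False] by simp
    then show ?thesis using l1 l2 eqv by simp
  qed
qed

lemma psi_true:
  assumes Dok: "\<forall>m<N * length ys. D m \<in> idx n"
    and pat: "\<forall>\<tau><N. T (\<lambda>\<rho>. D (\<tau> * length ys + \<rho>)) = (\<tau> \<in> S)"
  shows "sat M (v0 D) (psiD \<phi> x N S)"
proof -
  define v' where "v' = inst (v0 D) x b"
  have dx: "distinct x" using dist by simp
  have vk: "v' (x ! \<kappa>) = b ! \<kappa>" if "\<kappa> < length x" for \<kappa>
    unfolding v'_def by (rule inst_in[OF dx]) (use that blen in \<open>auto simp: in_set_zip\<close>)
  have vx: "map v' x = b" by (rule nth_equalityI) (use blen vk in auto)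
  have out: "\<forall>w. w \<notin> set x \<longrightarrow> v' w = v0 D w" unfolding v'_def by (simp add: inst_out)
  have dm: "\<forall>w\<in>set x. v' w \<in> dom M"
  proof
    fix w assume "w \<in> set x"
    then obtain \<kappa> where "\<kappa> < length x" "w = x ! \<kappa>" by (auto simp: in_set_conv_nth)
    then show "v' w \<in> dom M" using vk bdom blen by (metis nth_mem subsetD)
  qed
  have each: "sat M v' (ren (fr x \<tau>) \<phi>) = (\<tau> \<in> S)" if "\<tau> < N" for \<tau>
  proof -
    have "sat M v' (ren (fr x \<tau>) \<phi>) = sat M (v' \<circ> fr x \<tau>) \<phi>" by (rule sat_ren[OF fr_inj])
    also have "\<dots> = T (\<lambda>\<rho>. D (\<tau> * length ys + \<rho>))"
      unfolding T_def using agree[OF Dok that out] vx by simp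
    finally show ?thesis using pat that by simp
  qed
  have "sat M v' (Conjs (map (\<lambda>\<tau>. if \<tau> \<in> S then ren (fr x \<tau>) \<phi> else Neg (ren (fr x \<tau>) \<phi>)) [0..<N]))"
    unfolding sat_Conjs using each by auto
  then show ?thesis unfolding psiD_def by (rule Exs_intro[OF dm out])
qed

lemma no_shatter_config:
  assumes Dok: "\<forall>m<N * length ys. D m \<in> idx n"
    and all: "\<forall>S\<subseteq>{..<N}. sat M (v0 D) (psiD \<phi> x N S)"
  shows False
proof -
  define P where "P S v' \<longleftrightarrow> valuation M v' \<and> (\<forall>w. w \<notin> set x \<longrightarrow> v' w = v0 D w) \<and>
      (\<forall>\<tau><N. sat M (v' \<circ> fr x \<tau>) \<phi> = (\<tau> \<in> S))" for S v'
  have ex: "\<exists>v'. P S v'" if "S \<subseteq> {..<N}" for S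
  proof -
    have "sat M (v0 D) (psiD \<phi> x N S)" using all that by blast
    then have "sat M (v0 D) (Exs x (Conjs (map (\<lambda>\<tau>. if \<tau> \<in> S then ren (fr x \<tau>) \<phi> else Neg (ren (fr x \<tau>) \<phi>)) [0..<N])))"
      unfolding psiD_def .
    from Exs_elim[OF this v0_val[OF Dok]]
    obtain v' where v': "valuation M v'" "\<forall>w. w \<notin> set x \<longrightarrow> v' w = v0 D w"
      "sat M v' (Conjs (map (\<lambda>\<tau>. if \<tau> \<in> S then ren (fr x \<tau>) \<phi> else Neg (ren (fr x \<tau>) \<phi>)) [0..<N]))"
      by (elim exE conjE)
    have "\<forall>\<tau><N. sat M (v' \<circ> fr x \<tau>) \<phi> = (\<tau> \<in> S)"
    proof (intro allI impI)
      fix \<tau> assume "\<tau> < N"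
      then have "sat M v' (if \<tau> \<in> S then ren (fr x \<tau>) \<phi> else Neg (ren (fr x \<tau>) \<phi>))"
        using v'(3) unfolding sat_Conjs by auto
      then show "sat M (v' \<circ> fr x \<tau>) \<phi> = (\<tau> \<in> S)"
        by (auto simp: sat_ren[OF fr_inj] split: if_splits)
    qed
    then show ?thesis using v' unfolding P_def by blast
  qed
  define b' where "b' S = (SOME v'. P (S \<inter> {..<N}) v')" for S
  have Pb: "P (S \<inter> {..<N}) (b' S)" for S
  proof -
    have "S \<inter> {..<N} \<subseteq> {..<N}" by blast
    then show ?thesis unfolding b'_def by (rule someI_ex[OF ex])
  qed
  define a' where "a' \<tau> = v0 D \<circ> fr x \<tau>" for \<tau>
  have va: "valuation M (a' i)" for i
    using v0_val[OF Dok] unfolding a'_def valuation_def by simp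
  have vb: "valuation M (b' S)" for S using Pb unfolding P_def by blast
  have key: "sat M (\<lambda>k. if k \<in> fv \<phi> \<inter> set x then b' S k else a' i k) \<phi> \<longleftrightarrow> i \<in> S"
    if "i < N" "S \<subseteq> {..<N}" for i S
  proof -
    have "sat M (\<lambda>k. if k \<in> fv \<phi> \<inter> set x then b' S k else a' i k) \<phi> = sat M (b' S \<circ> fr x i) \<phi>"
    proof (rule sat_cong, intro ballI)
      fix k assume k: "k \<in> fv \<phi>"
      show "(if k \<in> fv \<phi> \<inter> set x then b' S k else a' i k) = (b' S \<circ> fr x i) k"
      proof (cases "k \<in> set x")
        case True
        then show ?thesis using k by (simp add: fr_x)
      next
        case False
        have "b' S (fr x i k) = v0 D (fr x i k)" using Pb[of S] fr_notx[OF False] unfolding P_def by blast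
        then show ?thesis using False by (simp add: a'_def)
      qed
    qed
    also have "\<dots> = (i \<in> S \<inter> {..<N})" using Pb[of S] that(1) unfolding P_def by blast
    finally show ?thesis using that by auto
  qed
  have "\<exists>(a' :: nat \<Rightarrow> nat \<Rightarrow> 'a) (b' :: nat set \<Rightarrow> nat \<Rightarrow> 'a).
      (\<forall>i. valuation M (a' i)) \<and> (\<forall>S. valuation M (b' S)) \<and>
      (\<forall>i<N. \<forall>S\<subseteq>{..<N}.
         sat M (\<lambda>k. if k \<in> fv \<phi> \<inter> set x then b' S k else a' i k) \<phi> \<longleftrightarrow> i \<in> S)"
  proof (rule exI[of _ a'], rule exI[of _ b'], intro conjI allI impI)
    show "\<And>i. valuation M (a' i)" by (rule va)
    show "\<And>S. valuation M (b' S)" by (rule vb)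
    show "\<And>i S. i < N \<Longrightarrow> S \<subseteq> {..<N} \<Longrightarrow>
       sat M (\<lambda>k. if k \<in> fv \<phi> \<inter> set x then b' S k else a' i k) \<phi> = (i \<in> S)"
      by (rule key)
  qed
  then show False using noshat by (rule notE[rotated])
qed

end



lemma qftp_sigma:
  assumes "\<forall>t<m. u' t = \<sigma> (u t)" "\<forall>t<m. \<forall>t'<m. u t < u t' \<longrightarrow> \<sigma> (u t) < \<sigma> (u t')"
  shows "same_qftp m u' u"
  unfolding same_qftp_def same_qftp_over_def
proof (intro conjI allI impI)
  fix t t' assume tt: "t < m" "t' < m"
  consider "u t < u t'" | "u t = u t'" | "u t' < u t" by linarith
  then have "(\<sigma> (u t) < \<sigma> (u t') \<longleftrightarrow> u t < u t') \<and> (\<sigma> (u t) = \<sigma> (u t') \<longleftrightarrow> u t = u t')"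
  proof cases
    case 1
    then have "\<sigma> (u t) < \<sigma> (u t')" using assms(2) tt by blast
    then show ?thesis using 1 by simp
  next
    case 2
    then show ?thesis by simp
  next
    case 3
    then have "\<sigma> (u t') < \<sigma> (u t)" using assms(2) tt by blast
    then show ?thesis using 3 by simp
  qed
  then show "(u' t < u' t') = (u t < u t')" "(u' t = u' t') = (u t = u t')"
    using assms(1) tt by simp_all
qed simp_all

context setting2
begin

lemma CP_bound:
  assumes s: "s < length n"
  shows "card (CP s) < (4 * length ys + 1) * N"
proof (rule ccontr)
  define r where "r = length ys"
  assume "\<not> card (CP s) < (4 * length ys + 1) * N"
  then have big: "(4 * r + 1) * N \<le> card (CP s)" by (simp add: r_def)
  have finCP: "finite (CP s)"
    by (rule finite_subset[of _ "{..<n ! s}"]) (auto simp: CP_def)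
  have "\<forall>q\<in>CP s. \<exists>i. ok i \<and> (\<forall>t<r. i t ! s \<noteq> Suc q) \<and> T (mv s q i) \<noteq> T i"
  proof
    fix q assume "q \<in> CP s"
    then have "\<not> good s q" by (simp add: CP_def)
    then obtain i where "ok i" "\<forall>t<length ys. i t ! s \<noteq> Suc q" "T (mv s q i) \<noteq> T i"
      unfolding good_def by blast
    then show "\<exists>i. ok i \<and> (\<forall>t<r. i t ! s \<noteq> Suc q) \<and> T (mv s q i) \<noteq> T i"
      unfolding r_def by blast
  qed
  from bchoice[OF this] obtain wit where wit: "\<forall>q\<in>CP s. ok (wit q) \<and> (\<forall>t<r. wit q t ! s \<noteq> Suc q) \<and>
      T (mv s q (wit q)) \<noteq> T (wit q)"
    by (elim exE) assumption
  define W where "W q = (\<lambda>t. wit q t ! s) ` {..<r}" for q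
  have Wc: "\<forall>p\<in>CP s. finite (W p) \<and> card (W p) \<le> r"
    unfolding W_def using card_image_le[of "{..<r}"] by auto
  obtain Q where Q: "Q \<subseteq> CP s" "card Q = N" "\<forall>p\<in>Q. \<forall>q\<in>Q. p \<noteq> q \<longrightarrow> q \<notin> W p \<and> Suc q \<notin> W p"
    using indep[OF finCP big Wc] by blast
  have finQ: "finite Q" using Q(1) finCP finite_subset by blast
  define L where "L = sorted_list_of_set Q"
  have L: "length L = N" "distinct L" "set L = Q" using finQ Q(2) by (auto simp: L_def)
  define p where "p \<tau> = L ! \<tau>" for \<tau>
  have pQ: "\<tau> < N \<Longrightarrow> p \<tau> \<in> Q" for \<tau> using L by (auto simp: p_def)
  have pinj: "\<tau> < N \<Longrightarrow> \<tau>' < N \<Longrightarrow> p \<tau> = p \<tau>' \<Longrightarrow> \<tau> = \<tau>'" for \<tau> \<tau>'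
    using L by (simp add: p_def nth_eq_iff_index_eq)
  define w where "w \<tau> = wit (p \<tau>)" for \<tau>
  have wok: "\<tau> < N \<Longrightarrow> ok (w \<tau>)" for \<tau> using wit pQ Q(1) by (auto simp: w_def)
  have wown: "\<tau> < N \<Longrightarrow> \<rho> < r \<Longrightarrow> w \<tau> \<rho> ! s \<noteq> Suc (p \<tau>)" for \<tau> \<rho>
    using wit pQ Q(1) by (auto simp: w_def)
  have wch: "\<tau> < N \<Longrightarrow> T (mv s (p \<tau>) (w \<tau>)) \<noteq> T (w \<tau>)" for \<tau>
    using wit pQ Q(1) by (auto simp: w_def)
  have psuc: "\<tau> < N \<Longrightarrow> Suc (p \<tau>) < n ! s" for \<tau>
    using pQ Q(1) by (auto simp: CP_def)
  have NC: "w \<tau> \<rho> ! s \<noteq> p \<tau>' \<and> w \<tau> \<rho> ! s \<noteq> Suc (p \<tau>')"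
    if "\<tau> < N" "\<tau>' < N" "\<tau> \<noteq> \<tau>'" "\<rho> < r" for \<tau> \<tau>' \<rho>
  proof -
    have "p \<tau> \<noteq> p \<tau>'" using pinj that by blast
    then have "p \<tau>' \<notin> W (p \<tau>) \<and> Suc (p \<tau>') \<notin> W (p \<tau>)" using Q(3) pQ that by blast
    moreover have "w \<tau> \<rho> ! s \<in> W (p \<tau>)" using that(4) by (auto simp: W_def w_def)
    ultimately show ?thesis by metis
  qed
  have lenw: "\<tau> < N \<Longrightarrow> \<rho> < r \<Longrightarrow> length (w \<tau> \<rho>) = length n" for \<tau> \<rho>
    using wok unfolding ok_def idx_def r_def by auto
  have mdiv: "m < N * r \<Longrightarrow> m div r < N \<and> m mod r < r" for m
  proof -
    assume m: "m < N * r"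
    then have "r > 0" by (cases r) auto
    then show ?thesis using m by (simp add: less_mult_imp_div_less)
  qed
  define moved where "moved S \<tau> \<longleftrightarrow> T (w \<tau>) \<noteq> (\<tau> \<in> S)" for S \<tau>
  define cw where "cw S \<tau> = (if moved S \<tau> then mv s (p \<tau>) (w \<tau>) else w \<tau>)" for S \<tau>
  define C where "C m = w (m div r) (m mod r)" for m
  define CS where "CS S m = cw S (m div r) (m mod r)" for S m
  have okcw: "\<tau> < N \<Longrightarrow> ok (cw S \<tau>)" for S \<tau>
    using wok mv_ok[OF _ s psuc] by (auto simp: cw_def)
  have Cok: "\<forall>m<N * length ys. C m \<in> idx n"
    using wok mdiv unfolding C_def ok_def r_def by auto
  have CSok: "\<forall>m<N * length ys. CS S m \<in> idx n" for S
    using okcw mdiv unfolding CS_def ok_def r_def by auto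
  have Tcw: "\<tau> < N \<Longrightarrow> T (cw S \<tau>) = (\<tau> \<in> S)" for S \<tau>
    using wch unfolding cw_def moved_def by auto
  have blk: "\<tau> < N \<Longrightarrow> T (\<lambda>\<rho>. CS S (\<tau> * length ys + \<rho>)) = T (cw S \<tau>)" for S \<tau>
  proof (rule T_cong, intro allI impI)
    fix \<rho> assume "\<rho> < length ys"
    then have "(\<tau> * length ys + \<rho>) div length ys = \<tau>" "(\<tau> * length ys + \<rho>) mod length ys = \<rho>"
      using divmod_blk by blast+
    then show "CS S (\<tau> * length ys + \<rho>) = cw S \<tau> \<rho>" by (simp add: CS_def r_def)
  qed
  have psiCS: "sat M (v0 (CS S)) (psiD \<phi> x N S)" for S
    by (rule psi_true[OF CSok]) (use blk Tcw in auto)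
  have cwnth: "cw S \<tau> \<rho> ! s' = (if moved S \<tau> \<and> s' = s \<and> w \<tau> \<rho> ! s = p \<tau> then Suc (p \<tau>) else w \<tau> \<rho> ! s')"
    if "\<tau> < N" "\<rho> < r" for S \<tau> \<rho> s'
    using lenw[OF that] s by (auto simp: cw_def mv_def nth_list_update)
  have qf: "same_qftp (length (zsD x ys N)) (\<lambda>t. CS S t ! s') (\<lambda>t. C t ! s')"
    if s': "s' < length n" for S s'
  proof (cases "s' = s")
    case False
    show ?thesis
    proof (rule qftp_sigma[where \<sigma> = id])
      show "\<forall>t<length (zsD x ys N). CS S t ! s' = id (C t ! s')"
        using cwnth mdiv False by (auto simp: CS_def C_def zs_len r_def)
    qed simp
  next
    case True
    define PM where "PM = p ` {\<tau>. \<tau> < N \<and> moved S \<tau>}"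
    define \<sigma> where "\<sigma> c = (if c \<in> PM then Suc c else c)" for c
    have s1: "CS S m ! s = \<sigma> (C m ! s)" if m: "m < N * r" for m
    proof -
      define \<tau> where "\<tau> = m div r"
      define \<rho> where "\<rho> = m mod r"
      have tr: "\<tau> < N" "\<rho> < r" using mdiv[OF m] by (auto simp: \<tau>_def \<rho>_def)
      have e1: "CS S m ! s = (if moved S \<tau> \<and> w \<tau> \<rho> ! s = p \<tau> then Suc (p \<tau>) else w \<tau> \<rho> ! s)"
        using cwnth[OF tr] by (simp add: CS_def \<tau>_def \<rho>_def)
      have e2: "C m ! s = w \<tau> \<rho> ! s" by (simp add: C_def \<tau>_def \<rho>_def)
      show ?thesis
      proof (cases "moved S \<tau> \<and> w \<tau> \<rho> ! s = p \<tau>")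
        case True
        then have "w \<tau> \<rho> ! s \<in> PM" using tr by (auto simp: PM_def)
        then show ?thesis using True e1 e2 by (simp add: \<sigma>_def)
      next
        case False
        have "w \<tau> \<rho> ! s \<notin> PM"
        proof
          assume "w \<tau> \<rho> ! s \<in> PM"
          then obtain \<tau>' where t': "\<tau>' < N" "moved S \<tau>'" "w \<tau> \<rho> ! s = p \<tau>'" by (auto simp: PM_def)
          show False
          proof (cases "\<tau>' = \<tau>")
            case True
            then show False using False t' by simp
          next
            case False
            then show False using NC[OF tr(1) t'(1) _ tr(2)] t'(3) by metis
          qed
        qed
        then show ?thesis using False e1 e2 by (simp add: \<sigma>_def)
      qed
    qed
    have s2: "\<sigma> (C m ! s) < \<sigma> (C m' ! s)" if m: "m < N * r" "m' < N * r" "C m ! s < C m' ! s" for m m'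
    proof (cases "C m ! s \<in> PM")
      case True
      then obtain \<tau>' where t': "\<tau>' < N" "C m ! s = p \<tau>'" by (auto simp: PM_def)
      have tr2: "m' div r < N" "m' mod r < r" using mdiv[OF m(2)] by auto
      have "C m' ! s \<noteq> Suc (C m ! s)"
      proof (cases "m' div r = \<tau>'")
        case True
        then show ?thesis using wown[OF t'(1) tr2(2)] t'(2) by (simp add: C_def)
      next
        case False
        then show ?thesis using NC[OF tr2(1) t'(1) False tr2(2)] t'(2) by (simp add: C_def)
      qed
      then have "Suc (C m ! s) < C m' ! s" using m(3) by simp
      then show ?thesis using True by (simp add: \<sigma>_def)
    next
      case False
      then show ?thesis using m(3) by (simp add: \<sigma>_def)
    qed
    show ?thesis
      using qftp_sigma[of "length (zsD x ys N)" "\<lambda>t. CS S t ! s" \<sigma> "\<lambda>t. C t ! s"] s1 s2 True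
      by (simp add: zs_len r_def)
  qed
  have "\<forall>S\<subseteq>{..<N}. sat M (v0 C) (psiD \<phi> x N S)"
  proof (intro allI impI)
    fix S assume S: "S \<subseteq> {..<N}"
    have mem: "(psiD \<phi> x N S, zsD x ys N) \<in> DeltaD \<phi> x ys N"
      using S by (auto simp: DeltaD_def)
    have ok2: "\<forall>t<length (zsD x ys N). CS S t \<in> idx n \<and> C t \<in> idx n"
      using CSok Cok by (simp add: zs_len)
    have h: "\<forall>i0 i1. (\<forall>t<length (zsD x ys N). i0 t \<in> idx n \<and> i1 t \<in> idx n) \<and>
        (\<forall>s<length n. same_qftp (length (zsD x ys N)) (\<lambda>t. i0 t ! s) (\<lambda>t. i1 t ! s)) \<longrightarrow>
        (sat M (inst (dflt M) (concat (zsD x ys N)) (concat (map (\<lambda>t. a (i0 t)) [0..<length (zsD x ys N)]))) (psiD \<phi> x N S)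
         \<longleftrightarrow> sat M (inst (dflt M) (concat (zsD x ys N)) (concat (map (\<lambda>t. a (i1 t)) [0..<length (zsD x ys N)]))) (psiD \<phi> x N S))"
      using bspec[OF indisc[unfolded delta_indisc_def] mem] by simp
    have qf2: "\<forall>s'<length n. same_qftp (length (zsD x ys N)) (\<lambda>t. CS S t ! s') (\<lambda>t. C t ! s')"
      using qf by blast
    have "sat M (v0 (CS S)) (psiD \<phi> x N S) = sat M (v0 C) (psiD \<phi> x N S)"
      unfolding v0_def by (rule h[rule_format, OF conjI[OF ok2 qf2]])
    then show "sat M (v0 C) (psiD \<phi> x N S)" using psiCS by simp
  qed
  then show False by (rule no_shatter_config[OF Cok])
qed

end



theorem lemma3p5:
  fixes T :: "('f, 'p) fm set"
    and M :: "('a, 'f, 'p) struc"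
    and \<phi> :: "('f, 'p) fm"
    and x :: "nat list" and ys :: "nat list list" and len :: nat
  assumes "complete_theory TYPE('a) T"
    and "is_model M T"
    and "distinct (x @ concat ys)"
    and "\<forall>y\<in>set ys. length y = len"
    and "fv \<phi> \<subseteq> set x \<union> (\<Union>y\<in>set ys. set y)"
    and "nip M \<phi>"
  shows "\<exists>(d'::nat) (\<Delta> :: (('f, 'p) fm \<times> nat list list) set). wf_Delta len \<Delta> \<and>
    (\<forall>(n::nat list) (a :: nat list \<Rightarrow> 'a list) (b :: 'a list).
       (\<forall>s<length n. 0 < n ! s) \<and>
       (\<forall>i\<in>idx n. length (a i) = len \<and> set (a i) \<subseteq> dom M) \<and>
       length b = length x \<and> set b \<subseteq> dom M \<and>
       delta_indisc M \<Delta> n a \<longrightarrow>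
       (\<exists>j :: nat \<Rightarrow> nat list. (\<forall>e<d'. j e \<in> idx n) \<and>
          (\<forall>i0 i1 :: nat \<Rightarrow> nat list.
             (\<forall>t<length ys. i0 t \<in> idx n \<and> i1 t \<in> idx n) \<and>
             (\<forall>s<length n. same_qftp_over (length ys) (\<lambda>t. i0 t ! s) (\<lambda>t. i1 t ! s) d' (\<lambda>e. j e ! s)) \<longrightarrow>
             (sat M (inst (dflt M) (x @ concat ys) (b @ concat (map (\<lambda>t. a (i0 t)) [0..<length ys]))) \<phi>
              \<longleftrightarrow> sat M (inst (dflt M) (x @ concat ys) (b @ concat (map (\<lambda>t. a (i1 t)) [0..<length ys]))) \<phi>))))"
proof -
  note assms' = assms
  have domne: "dom M \<noteq> {}" using assms(2) by (simp add: is_model_def is_struc_def)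
  have "nip_part M \<phi> (fv \<phi> \<inter> set x)" using assms(6) by (simp add: nip_def)
  then obtain N where noshat: "\<not> (\<exists>(a' :: nat \<Rightarrow> nat \<Rightarrow> 'a) (b' :: nat set \<Rightarrow> nat \<Rightarrow> 'a).
      (\<forall>i. valuation M (a' i)) \<and> (\<forall>S. valuation M (b' S)) \<and>
      (\<forall>i<N. \<forall>S\<subseteq>{..<N}.
         sat M (\<lambda>k. if k \<in> fv \<phi> \<inter> set x then b' S k else a' i k) \<phi> \<longleftrightarrow> i \<in> S))"
    unfolding nip_part_def by blast
  define K where "K = (4 * length ys + 1) * N"
  show ?thesis
  proof (intro exI[of _ "2 * K + 1"] exI[of _ "DeltaD \<phi> x ys N"] conjI allI impI)
    show "wf_Delta len (DeltaD \<phi> x ys N)" by (rule wf_DeltaD[OF assms(3,4,5)])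
  next
    fix n :: "nat list" and a :: "nat list \<Rightarrow> 'a list" and b :: "'a list"
    assume H: "(\<forall>s<length n. 0 < n ! s) \<and>
       (\<forall>i\<in>idx n. length (a i) = len \<and> set (a i) \<subseteq> dom M) \<and>
       length b = length x \<and> set b \<subseteq> dom M \<and>
       delta_indisc M (DeltaD \<phi> x ys N) n a"
    interpret S2: setting2 M \<phi> x ys n a b len N
      using domne assms(3,4,5) H noshat by unfold_locales auto
    define CPs where "CPs s = insert 0 (S2.CP s \<union> Suc ` S2.CP s)" for s
    define L where "L s = sorted_list_of_set (CPs s)" for s
    define j where "j e = map (\<lambda>s. L s ! min e (length (L s) - 1)) [0..<length n]" for e
    have finCP: "finite (S2.CP s)" for s
      by (rule finite_subset[of _ "{..<n ! s}"]) (auto simp: S2.CP_def)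
    have finCPs: "finite (CPs s)" for s using finCP by (simp add: CPs_def)
    have setL: "set (L s) = CPs s" for s using finCPs by (simp add: L_def)
    have lenL: "length (L s) = card (CPs s)" for s using finCPs by (simp add: L_def)
    have Lpos: "0 < length (L s)" for s using setL[of s] by (auto simp: CPs_def)
    have jnth: "s < length n \<Longrightarrow> j e ! s = L s ! min e (length (L s) - 1)" for e s
      by (simp add: j_def)
    have CPs_lt: "s < length n \<Longrightarrow> c \<in> CPs s \<Longrightarrow> c < n ! s" for s c
      using H by (auto simp: CPs_def S2.CP_def)
    have jidx: "\<forall>e<2 * K + 1. j e \<in> idx n"
    proof (intro allI impI)
      fix e assume "e < 2 * K + 1"
      have "L s ! min e (length (L s) - 1) \<in> CPs s" for s
        using Lpos[of s] setL[of s] by (metis diff_less less_one min.strict_coboundedI2 nth_mem)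
      then show "j e \<in> idx n" using CPs_lt by (auto simp: idx_def jnth j_def)
    qed
    have goods: "\<forall>s<length n. \<forall>q. Suc q < n ! s \<and> q \<notin> (\<lambda>e. j e ! s) ` {..<2 * K + 1} \<longrightarrow> S2.good s q"
    proof (intro allI impI, elim conjE)
      fix s q assume s: "s < length n" and q: "Suc q < n ! s" "q \<notin> (\<lambda>e. j e ! s) ` {..<2 * K + 1}"
      show "S2.good s q"
      proof (rule ccontr)
        assume "\<not> S2.good s q"
        then have qc: "q \<in> S2.CP s" using q by (simp add: S2.CP_def)
        then have "q \<in> set (L s)" using setL by (simp add: CPs_def)
        then obtain e where e: "e < length (L s)" "L s ! e = q" by (auto simp: in_set_conv_nth)
        have "card (CPs s) \<le> Suc (card (S2.CP s \<union> Suc ` S2.CP s))"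
          unfolding CPs_def using finCP[of s] by (simp add: card_insert_if)
        also have "\<dots> \<le> Suc (card (S2.CP s) + card (Suc ` S2.CP s))" using card_Un_le by simp
        also have "\<dots> \<le> Suc (2 * card (S2.CP s))" using card_image_le[OF finCP[of s], of Suc] by simp
        finally have "length (L s) \<le> Suc (2 * card (S2.CP s))" using lenL by simp
        moreover have "card (S2.CP s) < K" using S2.CP_bound[OF s] by (simp add: K_def)
        ultimately have "e < 2 * K + 1" using e by linarith
        moreover have "min e (length (L s) - 1) = e" using e(1) by simp
        then have "j e ! s = q" using e jnth[OF s, of e] by simp
        ultimately show False using q(2) by blast
      qed
    qed
    show "\<exists>j. (\<forall>e<2 * K + 1. j e \<in> idx n) \<and>
          (\<forall>i0 i1. (\<forall>t<length ys. i0 t \<in> idx n \<and> i1 t \<in> idx n) \<and>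
             (\<forall>s<length n. same_qftp_over (length ys) (\<lambda>t. i0 t ! s) (\<lambda>t. i1 t ! s) (2 * K + 1) (\<lambda>e. j e ! s)) \<longrightarrow>
             (sat M (inst (dflt M) (x @ concat ys) (b @ concat (map (\<lambda>t. a (i0 t)) [0..<length ys]))) \<phi>
              \<longleftrightarrow> sat M (inst (dflt M) (x @ concat ys) (b @ concat (map (\<lambda>t. a (i1 t)) [0..<length ys]))) \<phi>))"
    proof (intro exI[of _ j] conjI jidx allI impI, elim conjE)
      fix i0 i1
      assume ix: "\<forall>t<length ys. i0 t \<in> idx n \<and> i1 t \<in> idx n"
        and qf: "\<forall>s<length n. same_qftp_over (length ys) (\<lambda>t. i0 t ! s) (\<lambda>t. i1 t ! s) (2 * K + 1) (\<lambda>e. j e ! s)"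
      have "S2.T i0 = S2.T i1"
        by (rule S2.allcoords[OF _ _ qf goods]) (use ix in \<open>auto simp: S2.ok_def\<close>)
      then show "sat M (inst (dflt M) (x @ concat ys) (b @ concat (map (\<lambda>t. a (i0 t)) [0..<length ys]))) \<phi>
              \<longleftrightarrow> sat M (inst (dflt M) (x @ concat ys) (b @ concat (map (\<lambda>t. a (i1 t)) [0..<length ys]))) \<phi>"
        by (simp add: S2.T_def)
    qed
  qed
qed



end
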